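(* Let $\mathcal{A}$ be a central and essential arrangement in $\mathbb{Q}^l$ as in the context, $\sigma$ a term ordering and $p$ a prime. If $p$ is $(\sigma,2)$-lucky for $\mathcal{A}$, then $p$ is good for $\mathcal{A}$.
   Context: $\mathcal{A}=\{H_1,\dots,H_n\}$: $n$ distinct linear hyperplanes in $\mathbb{Q}^l$ with $\bigcap H_i=\{0\}$, $H_i=\{\alpha_i=0\}$, $\alpha_i\in\mathbb{Z}[x_1,\dots,x_l]$ a nonzero linear form whose coefficients are not all divisible by any prime, $Q(\mathcal{A})=\prod\alpha_i$. $p$ is good for $\mathcal{A}$ if the reduction of $Q(\mathcal{A})$ mod $p$ is reduced, equivalently the reductions $(\alpha_i)_p,(\alpha_j)_p$ are not scalar multiples of one another for all $i<j$. For a term ordering $\sigma$ and nonzero $f\in\mathbb{Z}[x_1,\dots,x_l]$, $\mathrm{LM}_\sigma(f)$ is the $\sigma$-leading term times its coefficient $\mathrm{LC}_\sigma(f)$. A minimal strong $\sigma$-Gröbner basis of an ideal $I\subseteq\mathbb{Z}[x_1,\dots,x_l]$ is a finite generating set $G$ of nonzero elements of $I$ such that every nonzero $f\in I$ has $\mathrm{LM}_\sigma(f)$ divisible by some $\mathrm{LM}_\sigma(g)$, $g\in G$, and no $\mathrm{LM}_\sigma(g)$ divides $\mathrm{LM}_\sigma(g')$ for distinct $g,g'$; its set of leading coefficients is independent of the choice. $p$ is $\sigma$-lucky for $I$ if it divides none of them. For $1\le k\le n$, $p$ is $(\sigma,k)$-lucky for $\mathcal{A}$ if it is $\sigma$-lucky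 for every ideal $\langle\alpha_{i_1},\dots,\alpha_{i_k}\rangle\subseteq\mathbb{Z}[x_1,\dots,x_l]$ with $i_1<\dots<i_k$ and $\operatorname{codim}(H_{i_1}\cap\dots\cap H_{i_k})=k$. *)

theory Defs
  imports Complex_Main "HOL-Library.Poly_Mapping" "HOL-Number_Theory.Cong"
begin

text \<open>Multivariate integer polynomials: a monomial x^e is a finitely supported
 exponent vector e :: nat =>0 nat (variable x_(k+1) has index k), a polynomial
 is a finitely supported map from monomials to integer coefficients.\<close>

type_synonym monom = "nat \<Rightarrow>\<^sub>0 nat"
type_synonym mpoly = "monom \<Rightarrow>\<^sub>0 int"

definition monoms :: "nat \<Rightarrow> monom set" where
  "monoms l = {m. Poly_Mapping.keys m \<subseteq> {..<l}}"

definition polys :: "nat \<Rightarrow> mpoly set" where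
  "polys l = {f. Poly_Mapping.keys f \<subseteq> monoms l}"

definition linform :: "nat \<Rightarrow> (nat \<Rightarrow> int) \<Rightarrow> mpoly" where
  "linform l a = (\<Sum>k<l. Poly_Mapping.single (Poly_Mapping.single k 1) (a k))"

definition ideal_gen :: "nat \<Rightarrow> mpoly set \<Rightarrow> mpoly set" where
  "ideal_gen l G = {f. \<exists>c. (\<forall>g\<in>G. c g \<in> polys l) \<and> f = (\<Sum>g\<in>G. c g * g)}"

definition term_order :: "nat \<Rightarrow> (monom \<Rightarrow> monom \<Rightarrow> bool) \<Rightarrow> bool" where
  "term_order l le \<longleftrightarrow>
     (\<forall>m\<in>monoms l. le m m) \<and>
     (\<forall>m1\<in>monoms l. \<forall>m2\<in>monoms l. le m1 m2 \<and> le m2 m1 \<longrightarrow> m1 = m2) \<and>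
     (\<forall>m1\<in>monoms l. \<forall>m2\<in>monoms l. \<forall>m3\<in>monoms l. le m1 m2 \<and> le m2 m3 \<longrightarrow> le m1 m3) \<and>
     (\<forall>m1\<in>monoms l. \<forall>m2\<in>monoms l. le m1 m2 \<or> le m2 m1) \<and>
     (\<forall>m\<in>monoms l. le 0 m) \<and>
     (\<forall>m1\<in>monoms l. \<forall>m2\<in>monoms l. \<forall>m\<in>monoms l. le m1 m2 \<longrightarrow> le (m1 + m) (m2 + m))"

definition lterm :: "(monom \<Rightarrow> monom \<Rightarrow> bool) \<Rightarrow> mpoly \<Rightarrow> monom" where
  "lterm le f = (THE m. m \<in> Poly_Mapping.keys f \<and> (\<forall>m'\<in>Poly_Mapping.keys f. le m' m))"

definition lcoeff :: "(monom \<Rightarrow> monom \<Rightarrow> bool) \<Rightarrow> mpoly \<Rightarrow> int" where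
  "lcoeff le f = Poly_Mapping.lookup f (lterm le f)"

definition LM :: "(monom \<Rightarrow> monom \<Rightarrow> bool) \<Rightarrow> mpoly \<Rightarrow> mpoly" where
  "LM le f = Poly_Mapping.single (lterm le f) (lcoeff le f)"

definition pdvd :: "nat \<Rightarrow> mpoly \<Rightarrow> mpoly \<Rightarrow> bool" where
  "pdvd l g f \<longleftrightarrow> (\<exists>h\<in>polys l. f = h * g)"

definition min_strong_GB :: "nat \<Rightarrow> (monom \<Rightarrow> monom \<Rightarrow> bool) \<Rightarrow> mpoly set \<Rightarrow> mpoly set \<Rightarrow> bool" where
  "min_strong_GB l le I G \<longleftrightarrow>
     finite G \<and> G \<subseteq> I - {0} \<and> ideal_gen l G = I \<and>
     (\<forall>f\<in>I - {0}. \<exists>g\<in>G. pdvd l (LM le g) (LM le f)) \<and>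
     (\<forall>g\<in>G. \<forall>g'\<in>G. g \<noteq> g' \<longrightarrow> \<not> pdvd l (LM le g) (LM le g'))"

definition lucky :: "nat \<Rightarrow> (monom \<Rightarrow> monom \<Rightarrow> bool) \<Rightarrow> int \<Rightarrow> mpoly set \<Rightarrow> bool" where
  "lucky l le p I \<longleftrightarrow> (\<forall>G. min_strong_GB l le I G \<longrightarrow> (\<forall>g\<in>G. \<not> p dvd lcoeff le g))"

text \<open>Arrangements: alpha i = coefficient vector of the i-th form (i < n), entries k < l.
 Vectors of Q^l are functions nat \<Rightarrow> rat vanishing outside {..<l}.\<close>
definition qvecs :: "nat \<Rightarrow> (nat \<Rightarrow> rat) set" where
  "qvecs l = {x. \<forall>k\<ge>l. x k = 0}"

definition hyperplane :: "nat \<Rightarrow> (nat \<Rightarrow> int) \<Rightarrow> (nat \<Rightarrow> rat) set" where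
  "hyperplane l a = {x\<in>qvecs l. (\<Sum>k<l. of_int (a k) * x k) = 0}"

definition lin_indep_list :: "(nat \<Rightarrow> rat) list \<Rightarrow> bool" where
  "lin_indep_list vs \<longleftrightarrow>
     (\<forall>c::nat \<Rightarrow> rat. (\<lambda>k. \<Sum>i<length vs. c i * (vs ! i) k) = (\<lambda>k. 0) \<longrightarrow> (\<forall>i<length vs. c i = 0))"

definition qdim :: "(nat \<Rightarrow> rat) set \<Rightarrow> nat" where
  "qdim W = (GREATEST d. \<exists>vs. length vs = d \<and> set vs \<subseteq> W \<and> lin_indep_list vs)"

definition codim :: "nat \<Rightarrow> (nat \<Rightarrow> rat) set \<Rightarrow> nat" where
  "codim l W = l - qdim W"

definition arrangement :: "nat \<Rightarrow> nat \<Rightarrow> (nat \<Rightarrow> nat \<Rightarrow> int) \<Rightarrow> bool" where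
  "arrangement l n alpha \<longleftrightarrow>
     (\<forall>i<n. \<exists>k<l. alpha i k \<noteq> 0) \<and>
     (\<forall>i<n. \<forall>q::int. prime q \<longrightarrow> \<not> (\<forall>k<l. q dvd alpha i k)) \<and>
     (\<forall>i<n. \<forall>j<n. i \<noteq> j \<longrightarrow> hyperplane l (alpha i) \<noteq> hyperplane l (alpha j)) \<and>
     (\<Inter>i<n. hyperplane l (alpha i)) = {\<lambda>k. 0}"

definition good_prime :: "nat \<Rightarrow> nat \<Rightarrow> (nat \<Rightarrow> nat \<Rightarrow> int) \<Rightarrow> int \<Rightarrow> bool" where
  "good_prime l n alpha p \<longleftrightarrow>
     (\<forall>i j. i < j \<and> j < n \<longrightarrow>
        \<not> (\<exists>c. \<forall>k<l. [alpha i k = c * alpha j k] (mod p)) \<and>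
        \<not> (\<exists>c. \<forall>k<l. [alpha j k = c * alpha i k] (mod p)))"

definition lucky_k :: "nat \<Rightarrow> nat \<Rightarrow> (nat \<Rightarrow> nat \<Rightarrow> int) \<Rightarrow> (monom \<Rightarrow> monom \<Rightarrow> bool) \<Rightarrow> nat \<Rightarrow> int \<Rightarrow> bool" where
  "lucky_k l n alpha le k p \<longleftrightarrow>
     (\<forall>S. S \<subseteq> {..<n} \<and> card S = k \<and> codim l (\<Inter>i\<in>S. hyperplane l (alpha i)) = k \<longrightarrow>
        lucky l le p (ideal_gen l ((\<lambda>i. linform l (alpha i)) ` S)))"

end

theory Submission
  imports Defs "HOL-Library.Function_Algebras"
begin
lemma lookup_mult_single_shift:
  "Poly_Mapping.lookup (p * Poly_Mapping.single t x) (s + t) = Poly_Mapping.lookup (p::mpoly) s * x"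
proof -
  have "Poly_Mapping.lookup (p * Poly_Mapping.single t x) (s + t)
     = (\<Sum>l. Poly_Mapping.lookup p l * (\<Sum>q. Poly_Mapping.lookup (Poly_Mapping.single t x) q when s + t = l + q))"
    by (rule lookup_mult)
  also have "\<dots> = (\<Sum>l. Poly_Mapping.lookup p l * (\<Sum>q. (x when t = q) when s + t = l + q))"
    by (simp only: lookup_single)
  also have "\<And>l. (\<Sum>q. (x when t = q) when s + t = l + q) = (x when s = l)"
  proof -
    fix l
    have "(\<Sum>q. (x when t = q) when s + t = l + q) = (\<Sum>q. (x when s + t = l + t) when t = q)"
      by (rule Sum_any.cong) (auto simp: when_def)
    also have "\<dots> = (x when s = l)" by simp
    finally show "(\<Sum>q. (x when t = q) when s + t = l + q) = (x when s = l)" .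
  qed
  hence "(\<Sum>l. Poly_Mapping.lookup p l * (\<Sum>q. (x when t = q) when s + t = l + q)) = (\<Sum>l. Poly_Mapping.lookup p l * (x when s = l))"
    by simp
  also have "\<dots> = (\<Sum>l. (Poly_Mapping.lookup p l * x) when s = l)"
    by (simp add: mult_when)
  also have "\<dots> = Poly_Mapping.lookup p s * x" by simp
  finally show ?thesis .
qed

lemma lookup_mult_single_notdvd:
  assumes "\<not> (\<exists>u. s = u + t)"
  shows "Poly_Mapping.lookup (p * Poly_Mapping.single t x) s = (0::int)"
proof -
  have "s \<notin> Poly_Mapping.keys (p * Poly_Mapping.single t x)"
  proof
    assume "s \<in> Poly_Mapping.keys (p * Poly_Mapping.single t x)"
    then obtain a b where "s = a + b" "b \<in> Poly_Mapping.keys (Poly_Mapping.single t x)"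
      using keys_mult by blast
    then show False using assms by (auto split: if_splits)
  qed
  then show ?thesis by (simp add: in_keys_iff)
qed

abbreviation lk where "lk \<equiv> Poly_Mapping.lookup"
abbreviation ks where "ks \<equiv> Poly_Mapping.keys"
abbreviation sg where "sg \<equiv> Poly_Mapping.single"

lemma monoms_add: "a \<in> monoms l \<Longrightarrow> b \<in> monoms l \<Longrightarrow> a + b \<in> monoms l"
  unfolding monoms_def using keys_add[of a b] by auto

lemma monoms_zero[simp]: "0 \<in> monoms l"
  unfolding monoms_def by simp

lemma monoms_summand: "a + b \<in> monoms l \<Longrightarrow> b \<in> monoms l"
proof -
  assume "a + b \<in> monoms l"
  moreover have "ks b \<subseteq> ks (a + b)"
    by (auto simp: in_keys_iff lookup_add)
  ultimately show ?thesis unfolding monoms_def by auto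
qed

lemma polys_zero[simp]: "0 \<in> polys l"
  unfolding polys_def by simp

lemma polys_add: "f \<in> polys l \<Longrightarrow> g \<in> polys l \<Longrightarrow> f + g \<in> polys l"
  unfolding polys_def using keys_add[of f g] by auto

lemma polys_uminus: "f \<in> polys l \<Longrightarrow> - f \<in> polys l"
  unfolding polys_def by simp

lemma polys_diff: "f \<in> polys l \<Longrightarrow> g \<in> polys l \<Longrightarrow> f - g \<in> polys l"
  unfolding polys_def using keys_diff[of f g] by auto

lemma polys_mult: "f \<in> polys l \<Longrightarrow> g \<in> polys l \<Longrightarrow> f * g \<in> polys l"
  unfolding polys_def using keys_mult[of f g] monoms_add by blast

lemma polys_single: "e \<in> monoms l \<Longrightarrow> sg e d \<in> polys l"
  unfolding polys_def by auto

lemma polys_one[simp]: "1 \<in> polys l"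
  unfolding polys_def by simp

lemma polys_sum: "(\<And>x. x \<in> A \<Longrightarrow> F x \<in> polys l) \<Longrightarrow> sum F A \<in> polys l"
  by (induction A rule: infinite_finite_induct) (auto intro: polys_add)

definition is_ideal :: "nat \<Rightarrow> mpoly set \<Rightarrow> bool" where
  "is_ideal l I \<longleftrightarrow> I \<subseteq> polys l \<and> 0 \<in> I \<and> (\<forall>f\<in>I. \<forall>g\<in>I. f + g \<in> I) \<and>
     (\<forall>h\<in>polys l. \<forall>f\<in>I. h * f \<in> I)"

lemma is_idealD:
  assumes "is_ideal l I"
  shows "I \<subseteq> polys l" "0 \<in> I" "\<And>f g. f \<in> I \<Longrightarrow> g \<in> I \<Longrightarrow> f + g \<in> I"
    "\<And>h f. h \<in> polys l \<Longrightarrow> f \<in> I \<Longrightarrow> h * f \<in> I"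
  using assms unfolding is_ideal_def by auto

lemma is_ideal_uminus:
  assumes "is_ideal l I" "f \<in> I" shows "- f \<in> I"
proof -
  have "sg 0 (-1) \<in> polys l" by (rule polys_single) simp
  hence "sg 0 (-1) * f \<in> I" using is_idealD(4)[OF assms(1)] assms(2) by blast
  moreover have "sg 0 (-1) * f = - f"
    by (simp add: single_uminus)
  ultimately show ?thesis by simp
qed

lemma is_ideal_diff:
  assumes "is_ideal l I" "f \<in> I" "g \<in> I" shows "f - g \<in> I"
  using is_idealD(3)[OF assms(1) assms(2) is_ideal_uminus[OF assms(1,3)]] by simp

lemma is_ideal_sum:
  assumes "is_ideal l I" "\<And>x. x \<in> A \<Longrightarrow> F x \<in> I" shows "sum F A \<in> I"
  using assms(2)
  by (induction A rule: infinite_finite_induct) (auto intro: is_idealD[OF assms(1)])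

lemma is_ideal_ideal_gen:
  assumes "G \<subseteq> polys l"
  shows "is_ideal l (ideal_gen l G)"
  unfolding is_ideal_def
proof (intro conjI ballI)
  show "ideal_gen l G \<subseteq> polys l"
    unfolding ideal_gen_def using assms by (auto intro!: polys_sum polys_mult)
  show "0 \<in> ideal_gen l G"
    unfolding ideal_gen_def by (rule CollectI, rule exI[of _ "\<lambda>_. 0"]) simp
next
  fix f g assume "f \<in> ideal_gen l G" "g \<in> ideal_gen l G"
  then obtain c c' where c: "\<forall>g\<in>G. c g \<in> polys l" "f = (\<Sum>g\<in>G. c g * g)"
    and c': "\<forall>g\<in>G. c' g \<in> polys l" "g = (\<Sum>g\<in>G. c' g * g)"
    unfolding ideal_gen_def by blast
  show "f + g \<in> ideal_gen l G"
    unfolding ideal_gen_def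
    by (rule CollectI, rule exI[of _ "\<lambda>x. c x + c' x"])
       (simp add: c c' polys_add sum.distrib distrib_right)
next
  fix h f assume h: "h \<in> polys l" and "f \<in> ideal_gen l G"
  then obtain c where c: "\<forall>g\<in>G. c g \<in> polys l" "f = (\<Sum>g\<in>G. c g * g)"
    unfolding ideal_gen_def by blast
  show "h * f \<in> ideal_gen l G"
    unfolding ideal_gen_def
    by (rule CollectI, rule exI[of _ "\<lambda>x. h * c x"])
       (simp add: c h polys_mult sum_distrib_left mult.assoc)
qed

lemma ideal_gen_base:
  assumes "finite G" "g \<in> G" shows "g \<in> ideal_gen l G"
  unfolding ideal_gen_def
proof (rule CollectI, rule exI[of _ "\<lambda>x. if x = g then 1 else 0"], intro conjI)
  show "\<forall>ga\<in>G. (if ga = g then 1 else 0) \<in> polys l" by simp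
  have "(\<Sum>x\<in>G. (if x = g then 1 else 0) * x) = (\<Sum>x\<in>G. if x = g then x else 0)"
    by (rule sum.cong) auto
  also have "\<dots> = g" using assms by (simp add: sum.delta')
  finally show "g = (\<Sum>x\<in>G. (if x = g then 1 else 0) * x)" by simp
qed

lemma ideal_gen_subset:
  assumes "is_ideal l I" "G \<subseteq> I" shows "ideal_gen l G \<subseteq> I"
proof
  fix f assume "f \<in> ideal_gen l G"
  then obtain c where c: "\<forall>g\<in>G. c g \<in> polys l" "f = (\<Sum>g\<in>G. c g * g)"
    unfolding ideal_gen_def by blast
  show "f \<in> I" unfolding c(2)
    using assms c(1) by (intro is_ideal_sum) (auto intro: is_idealD(4))
qed

lemma term_orderD:
  assumes "term_order l le"
  shows "\<And>m. m \<in> monoms l \<Longrightarrow> le m m"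
    "\<And>m1 m2. m1 \<in> monoms l \<Longrightarrow> m2 \<in> monoms l \<Longrightarrow> le m1 m2 \<Longrightarrow> le m2 m1 \<Longrightarrow> m1 = m2"
    "\<And>m1 m2 m3. m1 \<in> monoms l \<Longrightarrow> m2 \<in> monoms l \<Longrightarrow> m3 \<in> monoms l \<Longrightarrow> le m1 m2 \<Longrightarrow> le m2 m3 \<Longrightarrow> le m1 m3"
    "\<And>m1 m2. m1 \<in> monoms l \<Longrightarrow> m2 \<in> monoms l \<Longrightarrow> le m1 m2 \<or> le m2 m1"
    "\<And>m. m \<in> monoms l \<Longrightarrow> le 0 m"
    "\<And>m1 m2 m. m1 \<in> monoms l \<Longrightarrow> m2 \<in> monoms l \<Longrightarrow> m \<in> monoms l \<Longrightarrow> le m1 m2 \<Longrightarrow> le (m1 + m) (m2 + m)"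
  using assms unfolding term_order_def by blast+

lemma term_order_dvd_le:
  assumes "term_order l le" "m \<in> monoms l" "e \<in> monoms l"
  shows "le m (e + m)"
  using term_orderD(6)[OF assms(1) monoms_zero assms(3) assms(2) term_orderD(5)[OF assms(1) assms(3)]]
  by (simp add: add.commute)

lemma exists_max:
  assumes "term_order l le" "finite A" "A \<noteq> {}" "A \<subseteq> monoms l"
  shows "\<exists>m\<in>A. \<forall>m'\<in>A. le m' m"
  using assms(2,3,4)
proof (induction A rule: finite_ne_induct)
  case (singleton x)
  then show ?case using term_orderD(1)[OF assms(1)] by auto
next
  case (insert x F)
  then obtain m where m: "m \<in> F" "\<forall>m'\<in>F. le m' m" by auto
  have mx: "m \<in> monoms l" "x \<in> monoms l" using insert m by auto
  show ?case
  proof (cases "le x m")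
    case True then show ?thesis using m by auto
  next
    case False
    then have "le m x" using term_orderD(4)[OF assms(1) mx] by auto
    then show ?thesis using m insert.prems term_orderD(1,3)[OF assms(1)] mx
      by (metis insert_iff subset_iff)
  qed
qed

lemma lterm_spec:
  assumes "term_order l le" "f \<in> polys l" "f \<noteq> 0"
  shows "lterm le f \<in> ks f" "\<And>m. m \<in> ks f \<Longrightarrow> le m (lterm le f)"
proof -
  have sub: "ks f \<subseteq> monoms l" using assms(2) unfolding polys_def by auto
  obtain t where t: "t \<in> ks f" "\<forall>m'\<in>ks f. le m' t"
    using exists_max[OF assms(1) finite_keys _ sub] assms(3) by auto
  have "lterm le f = t" unfolding lterm_def
  proof (rule the_equality)
    show "t \<in> ks f \<and> (\<forall>m'\<in>ks f. le m' t)" using t by auto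
  next
    fix m assume "m \<in> ks f \<and> (\<forall>m'\<in>ks f. le m' m)"
    then show "m = t" using t term_orderD(2)[OF assms(1)] sub by blast
  qed
  then show "lterm le f \<in> ks f" "\<And>m. m \<in> ks f \<Longrightarrow> le m (lterm le f)" using t by auto
qed

lemma lterm_eqI:
  assumes "term_order l le" "f \<in> polys l" "t \<in> ks f" "\<And>m. m \<in> ks f \<Longrightarrow> le m t"
  shows "lterm le f = t"
proof -
  have f0: "f \<noteq> 0" using assms(3) by auto
  have sub: "ks f \<subseteq> monoms l" using assms(2) unfolding polys_def by auto
  show ?thesis using lterm_spec[OF assms(1,2) f0] assms(3,4) term_orderD(2)[OF assms(1)] sub
    by blast
qed

lemma lterm_monoms:
  assumes "term_order l le" "f \<in> polys l" "f \<noteq> 0"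
  shows "lterm le f \<in> monoms l"
  using lterm_spec(1)[OF assms] assms(2) unfolding polys_def by auto

lemma lcoeff_nz:
  assumes "term_order l le" "f \<in> polys l" "f \<noteq> 0"
  shows "lcoeff le f \<noteq> 0"
  using lterm_spec(1)[OF assms] unfolding lcoeff_def by (simp add: in_keys_iff)

lemma below_lterm:
  assumes "term_order l le" "f \<in> polys l" "m \<in> monoms l" "le (lterm le f) m" "m \<noteq> lterm le f"
  shows "lk f m = 0"
proof (cases "f = 0")
  case False
  show ?thesis
  proof (rule ccontr)
    assume "lk f m \<noteq> 0"
    hence "m \<in> ks f" by (simp add: in_keys_iff)
    hence "le m (lterm le f)" using lterm_spec(2)[OF assms(1,2) False] by blast
    thus False using assms term_orderD(2)[OF assms(1)] lterm_monoms[OF assms(1,2) False] by blast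
  qed
qed simp

lemma keys_mult_single:
  "ks (p * sg t x) \<subseteq> {m + t | m. m \<in> ks (p::mpoly)}"
  using keys_mult[of p "sg t x"] by (auto split: if_splits)

lemma monmult_props:
  assumes "term_order l le" "g \<in> polys l" "g \<noteq> 0" "e \<in> monoms l" "d \<noteq> 0"
  shows "g * sg e d \<in> polys l" "g * sg e d \<noteq> 0"
    "lterm le (g * sg e d) = lterm le g + e" "lcoeff le (g * sg e d) = lcoeff le g * d"
proof -
  show P: "g * sg e d \<in> polys l" using assms by (intro polys_mult polys_single)
  have L: "lk (g * sg e d) (lterm le g + e) = lcoeff le g * d"
    unfolding lcoeff_def by (rule lookup_mult_single_shift)
  hence "lk (g * sg e d) (lterm le g + e) \<noteq> 0"
    using lcoeff_nz[OF assms(1-3)] assms(5) by simp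
  hence K: "lterm le g + e \<in> ks (g * sg e d)" by (simp add: in_keys_iff)
  then show "g * sg e d \<noteq> 0" by auto
  have T: "lterm le (g * sg e d) = lterm le g + e"
  proof (rule lterm_eqI[OF assms(1) P K])
    fix m assume "m \<in> ks (g * sg e d)"
    then obtain m' where m': "m = m' + e" "m' \<in> ks g" using keys_mult_single by blast
    have "m' \<in> monoms l" using m'(2) assms(2) unfolding polys_def by auto
    then show "le m (lterm le g + e)" unfolding m'
      using term_orderD(6)[OF assms(1) _ lterm_monoms[OF assms(1-3)] assms(4)]
        lterm_spec(2)[OF assms(1-3) m'(2)] by blast
  qed
  then show "lterm le (g * sg e d) = lterm le g + e" .
  show "lcoeff le (g * sg e d) = lcoeff le g * d" using L T unfolding lcoeff_def by simp
qed

definition pdiv :: "monom \<times> int \<Rightarrow> monom \<times> int \<Rightarrow> bool" where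
  "pdiv q q' \<longleftrightarrow> (\<exists>e. fst q' = e + fst q) \<and> snd q dvd snd q'"

lemma pdvd_single_iff:
  assumes "m \<in> monoms l" "m' \<in> monoms l" "c \<noteq> 0" "c' \<noteq> 0"
  shows "pdvd l (sg m c) (sg m' c') \<longleftrightarrow> pdiv (m, c) (m', c')"
proof
  assume "pdvd l (sg m c) (sg m' c')"
  then obtain h where h: "sg m' c' = h * sg m c" unfolding pdvd_def by blast
  have ex: "\<exists>e. m' = e + m"
  proof (rule ccontr)
    assume "\<not> (\<exists>e. m' = e + m)"
    hence "lk (h * sg m c) m' = 0" by (rule lookup_mult_single_notdvd)
    thus False using h assms(4) by (metis lookup_single_eq)
  qed
  then obtain e where e: "m' = e + m" by blast
  have "c' = lk (sg m' c') m'" by simp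
  also have "\<dots> = lk h e * c" using lookup_mult_single_shift[of h m c e] h e by simp
  finally have "c' = lk h e * c" .
  then show "pdiv (m, c) (m', c')" unfolding pdiv_def using e by auto
next
  assume "pdiv (m, c) (m', c')"
  then obtain e where e: "m' = e + m" and dv: "c dvd c'" unfolding pdiv_def by auto
  have em: "e \<in> monoms l" using assms(2) e monoms_summand[of m e] by (simp add: add.commute)
  have "sg m' c' = sg e (c' div c) * sg m c"
    using dv by (simp add: mult_single e)
  then show "pdvd l (sg m c) (sg m' c')" unfolding pdvd_def using polys_single[OF em] by blast
qed

lemma pdiv_trans: "pdiv a b \<Longrightarrow> pdiv b c \<Longrightarrow> pdiv a c"
  unfolding pdiv_def by (metis add.assoc dvd_trans)

lemma pdiv_refl: "pdiv a a"
  unfolding pdiv_def by (metis add_0 dvd_refl)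

lemma monom_antisym:
  assumes "(m'::monom) = e + m" "m = e' + m'" shows "m = m'"
proof -
  have "m = (e' + e) + m" using assms by (simp add: add.assoc)
  hence "e' + e = 0" by (metis add_0 add_right_cancel)
  hence "e = 0" by (intro poly_mapping_eqI) (metis lookup_add lookup_zero add_is_0)
  thus ?thesis using assms by simp
qed

section \<open>Dickson\<close>

lemma nat_subseq_mono:
  fixes s :: "nat \<Rightarrow> nat"
  shows "\<exists>r. strict_mono r \<and> (\<forall>n. s (r n) \<le> s (r (Suc n)))"
proof -
  obtain f where f: "strict_mono f" "monoseq (\<lambda>n. s (f n))" using seq_monosub by blast
  show ?thesis
  proof (cases "\<forall>m n. m \<le> n \<longrightarrow> s (f m) \<le> s (f n)")
    case True then show ?thesis using f(1) by (intro exI[of _ f]) auto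
  next
    case False
    then have dec: "\<forall>m n. m \<le> n \<longrightarrow> s (f n) \<le> s (f m)" using f(2) unfolding monoseq_def by blast
    define v where "v = (LEAST v. \<exists>n. s (f n) = v)"
    have "\<exists>n. s (f n) = v" unfolding v_def by (rule LeastI_ex) blast
    then obtain N where N: "s (f N) = v" by blast
    have const: "\<And>n. n \<ge> N \<Longrightarrow> s (f n) = v"
    proof -
      fix n assume "n \<ge> N"
      hence "s (f n) \<le> v" using dec N by auto
      moreover have "v \<le> s (f n)" unfolding v_def by (rule Least_le) blast
      ultimately show "s (f n) = v" by simp
    qed
    show ?thesis
      by (rule exI[of _ "\<lambda>n. f (n + N)"])
         (use f(1) const in \<open>auto simp: strict_mono_def\<close>)
  qed
qed

lemma dickson_aux:
  fixes s :: "nat \<Rightarrow> monom"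
  shows "\<exists>r. strict_mono r \<and> (\<forall>n. \<forall>k<L. lk (s (r n)) k \<le> lk (s (r (Suc n))) k)"
proof (induction L)
  case 0
  then show ?case by (intro exI[of _ id]) (auto simp: strict_mono_def)
next
  case (Suc L)
  then obtain r where r: "strict_mono r" "\<forall>n. \<forall>k<L. lk (s (r n)) k \<le> lk (s (r (Suc n))) k"
    by blast
  obtain r2 where r2: "strict_mono r2" "\<forall>n. lk (s (r (r2 n))) L \<le> lk (s (r (r2 (Suc n)))) L"
    using nat_subseq_mono[of "\<lambda>n. lk (s (r n)) L"] by blast
  have "\<forall>n. \<forall>k<Suc L. lk (s (r (r2 n))) k \<le> lk (s (r (r2 (Suc n)))) k"
  proof (intro allI impI)
    fix n k assume k: "k < Suc L"
    show "lk (s (r (r2 n))) k \<le> lk (s (r (r2 (Suc n)))) k"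
    proof (cases "k = L")
      case True then show ?thesis using r2 by simp
    next
      case False
      hence "k < L" using k by simp
      moreover have "r2 n \<le> r2 (Suc n)" using r2(1) by (simp add: strict_mono_less_eq)
      ultimately show ?thesis
        using lift_Suc_mono_le[of "\<lambda>n. lk (s (r n)) k"] r(2) by blast
    qed
  qed
  moreover have "strict_mono (r \<circ> r2)" using r(1) r2(1) by (rule strict_mono_o)
  ultimately show ?case by (intro exI[of _ "r \<circ> r2"]) (simp add: comp_def)
qed

lemma monoms_lookup_zero: "m \<in> monoms l \<Longrightarrow> k \<ge> l \<Longrightarrow> lk m k = 0"
  unfolding monoms_def by (auto simp: in_keys_iff)

lemma pointwise_dvd:
  assumes "\<forall>k. lk (m::monom) k \<le> lk m' k" shows "m' = (m' - m) + m"
  by (rule poly_mapping_eqI) (use assms in \<open>simp add: lookup_add lookup_minus\<close>)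

lemma dickson:
  fixes s :: "nat \<Rightarrow> monom"
  assumes "\<And>n. s n \<in> monoms l"
  shows "\<exists>r. strict_mono r \<and> (\<forall>n. \<exists>e. s (r (Suc n)) = e + s (r n))"
proof -
  obtain r where r: "strict_mono r" "\<forall>n. \<forall>k<l. lk (s (r n)) k \<le> lk (s (r (Suc n))) k"
    using dickson_aux by blast
  have "\<forall>n. \<forall>k. lk (s (r n)) k \<le> lk (s (r (Suc n))) k"
  proof (intro allI)
    fix n k show "lk (s (r n)) k \<le> lk (s (r (Suc n))) k"
    proof (cases "k < l")
      case True then show ?thesis using r(2) by blast
    next
      case False then show ?thesis using monoms_lookup_zero[OF assms[of "r n"], of k] by simp
    qed
  qed
  then show ?thesis using r(1) pointwise_dvd by blast
qed

definition tless :: "nat \<Rightarrow> (monom \<Rightarrow> monom \<Rightarrow> bool) \<Rightarrow> (monom \<times> monom) set" where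
  "tless l le = {(m', m). m' \<in> monoms l \<and> m \<in> monoms l \<and> le m' m \<and> m' \<noteq> m}"

lemma wf_tless:
  assumes "term_order l le" shows "wf (tless l le)"
  unfolding wf_iff_no_infinite_down_chain
proof
  assume "\<exists>f. \<forall>i. (f (Suc i), f i) \<in> tless l le"
  then obtain f where f: "\<forall>i. (f (Suc i), f i) \<in> tless l le" by blast
  have fm: "\<And>i. f i \<in> monoms l" using f unfolding tless_def by blast
  have desc: "i < j \<Longrightarrow> le (f j) (f i) \<and> f j \<noteq> f i" for i j
  proof (induction j)
    case 0 then show ?case by simp
  next
    case (Suc j)
    have st: "le (f (Suc j)) (f j)" "f (Suc j) \<noteq> f j" using f unfolding tless_def by auto
    show ?case
    proof (cases "i = j")
      case True then show ?thesis using st by simp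
    next
      case False
      hence ij: "i < j" using Suc by simp
      with Suc.IH have ih: "le (f j) (f i)" "f j \<noteq> f i" by auto
      have "le (f (Suc j)) (f i)" using term_orderD(3)[OF assms fm fm fm st(1) ih(1)] .
      moreover have "f (Suc j) \<noteq> f i"
      proof
        assume "f (Suc j) = f i"
        hence "le (f i) (f j)" using st by simp
        thus False using term_orderD(2)[OF assms fm fm _ ih(1)] ih(2) by metis
      qed
      ultimately show ?thesis by simp
    qed
  qed
  obtain r where r: "strict_mono r" "\<forall>n. \<exists>e. f (r (Suc n)) = e + f (r n)"
    using dickson[of f l, OF fm] by blast
  obtain e where e: "f (r 1) = e + f (r 0)" using r(2) by fastforce
  have em: "e \<in> monoms l" using fm[of "r 1"] e monoms_summand[of "f (r 0)" e]
    by (simp add: add.commute)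
  have "le (f (r 0)) (f (r 1))" using e term_order_dvd_le[OF assms fm em] by simp
  moreover have "r 0 < r 1" using r(1) by (simp add: strict_mono_def)
  ultimately show False using desc[of "r 0" "r 1"] term_orderD(2)[OF assms fm fm] by metis
qed

section \<open>Existence of minimal strong Groebner bases\<close>

definition LMset :: "(monom \<Rightarrow> monom \<Rightarrow> bool) \<Rightarrow> mpoly set \<Rightarrow> (monom \<times> int) set" where
  "LMset le I = {(lterm le f, lcoeff le f) | f. f \<in> I \<and> f \<noteq> 0}"

definition Minset :: "(monom \<Rightarrow> monom \<Rightarrow> bool) \<Rightarrow> mpoly set \<Rightarrow> (monom \<times> int) set" where
  "Minset le I = {q \<in> LMset le I. snd q > 0 \<and> (\<forall>q'\<in>LMset le I. pdiv q' q \<longrightarrow> pdiv q q')}"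

definition wit :: "(monom \<Rightarrow> monom \<Rightarrow> bool) \<Rightarrow> mpoly set \<Rightarrow> monom \<times> int \<Rightarrow> mpoly" where
  "wit le I q = (SOME f. f \<in> I \<and> f \<noteq> 0 \<and> lterm le f = fst q \<and> lcoeff le f = snd q)"

context
  fixes l le I
  assumes TO: "term_order l le" and ID: "is_ideal l I"
begin

lemma wit_spec:
  assumes "q \<in> LMset le I"
  shows "wit le I q \<in> I" "wit le I q \<noteq> 0" "lterm le (wit le I q) = fst q" "lcoeff le (wit le I q) = snd q"
proof -
  have "\<exists>f. f \<in> I \<and> f \<noteq> 0 \<and> lterm le f = fst q \<and> lcoeff le f = snd q"
    using assms unfolding LMset_def by auto
  then have "wit le I q \<in> I \<and> wit le I q \<noteq> 0 \<and> lterm le (wit le I q) = fst q \<and> lcoeff le (wit le I q) = snd q"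
    unfolding wit_def by (rule someI_ex)
  then show "wit le I q \<in> I" "wit le I q \<noteq> 0" "lterm le (wit le I q) = fst q" "lcoeff le (wit le I q) = snd q"
    by auto
qed

lemma inI_polys: "f \<in> I \<Longrightarrow> f \<in> polys l"
  using is_idealD(1)[OF ID] by blast

lemma LMset_props:
  assumes "q \<in> LMset le I" shows "fst q \<in> monoms l" "snd q \<noteq> 0"
  using assms lterm_monoms[OF TO inI_polys] lcoeff_nz[OF TO inI_polys] unfolding LMset_def by auto

lemma LMset_I: "f \<in> I \<Longrightarrow> f \<noteq> 0 \<Longrightarrow> (lterm le f, lcoeff le f) \<in> LMset le I"
  unfolding LMset_def by blast

lemma LMset_shift:
  assumes "(m, c) \<in> LMset le I" "e \<in> monoms l" "d \<noteq> 0"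
  shows "(m + e, c * d) \<in> LMset le I"
proof -
  let ?g = "wit le I (m, c)"
  have g: "?g \<in> I" "?g \<noteq> 0" "lterm le ?g = m" "lcoeff le ?g = c" using wit_spec[OF assms(1)] by auto
  have P: "?g * sg e d \<in> polys l" "?g * sg e d \<noteq> 0"
    "lterm le (?g * sg e d) = lterm le ?g + e" "lcoeff le (?g * sg e d) = lcoeff le ?g * d"
    using monmult_props[OF TO inI_polys[OF g(1)] g(2) assms(2,3)] by auto
  have "?g * sg e d \<in> I" using is_idealD(4)[OF ID polys_single[OF assms(2)] g(1)]
    by (simp add: mult.commute)
  then show ?thesis using LMset_I[of "?g * sg e d"] P g by simp
qed

lemma LMset_add:
  assumes "(m, c) \<in> LMset le I" "(m, c') \<in> LMset le I" "c + c' \<noteq> 0"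
  shows "(m, c + c') \<in> LMset le I"
proof -
  define f where "f = wit le I (m, c)"
  have f: "f \<in> I" "f \<noteq> 0" "lterm le f = m" "lcoeff le f = c"
    using wit_spec[OF assms(1)] unfolding f_def by simp_all
  define f' where "f' = wit le I (m, c')"
  have f': "f' \<in> I" "f' \<noteq> 0" "lterm le f' = m" "lcoeff le f' = c'"
    using wit_spec[OF assms(2)] unfolding f'_def by simp_all
  define h where "h = f + f'"
  have hI: "h \<in> I" unfolding h_def using is_idealD(3)[OF ID f(1) f'(1)] .
  have l1: "lk f m = c" using f(3,4) unfolding lcoeff_def by metis
  have l2: "lk f' m = c'" using f'(3,4) unfolding lcoeff_def by metis
  have hl: "lk h m = c + c'" unfolding h_def lookup_add l1 l2 ..
  hence mk: "m \<in> ks h" using assms(3) by (simp add: in_keys_iff)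
  have lt: "lterm le h = m"
  proof (rule lterm_eqI[OF TO inI_polys[OF hI] mk])
    fix k assume "k \<in> ks h"
    hence "k \<in> ks f \<or> k \<in> ks f'" using keys_add[of f f'] unfolding h_def by blast
    then show "le k m"
    proof
      assume "k \<in> ks f" then show "le k m"
        using lterm_spec(2)[OF TO inI_polys[OF f(1)] f(2)] f(3) by metis
    next
      assume "k \<in> ks f'" then show "le k m"
        using lterm_spec(2)[OF TO inI_polys[OF f'(1)] f'(2)] f'(3) by metis
    qed
  qed
  have h0: "h \<noteq> 0" using mk by auto
  have "lcoeff le h = c + c'" unfolding lcoeff_def lt hl ..
  then show ?thesis using LMset_I[OF hI h0] lt by simp
qed

lemma LMset_gcd:
  assumes "(m, c) \<in> LMset le I" "(m, c') \<in> LMset le I"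
  shows "(m, gcd c c') \<in> LMset le I"
proof -
  obtain u v where uv: "u * c + v * c' = gcd c c'" using bezout_int by blast
  have c0: "c \<noteq> 0" using LMset_props(2)[OF assms(1)] by simp
  hence g0: "gcd c c' \<noteq> 0" by simp
  show ?thesis
  proof (cases "u = 0")
    case True
    hence "v \<noteq> 0" using uv g0 by auto
    then show ?thesis using LMset_shift[OF assms(2) monoms_zero, of v] uv True by (simp add: mult.commute)
  next
    case u: False
    show ?thesis
    proof (cases "v = 0")
      case True
      then show ?thesis using LMset_shift[OF assms(1) monoms_zero, of u] uv u by (simp add: mult.commute)
    next
      case False
      have "(m, c * u) \<in> LMset le I" using LMset_shift[OF assms(1) monoms_zero u] by simp
      moreover have "(m, c' * v) \<in> LMset le I" using LMset_shift[OF assms(2) monoms_zero False] by simp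
      ultimately show ?thesis using LMset_add[of m "c * u" "c' * v"] uv g0 by (simp add: mult.commute)
    qed
  qed
qed

lemma Minset_finite: "finite (Minset le I)"
proof (rule ccontr)
  assume "infinite (Minset le I)"
  then obtain q :: "nat \<Rightarrow> monom \<times> int" where q: "inj q" "range q \<subseteq> Minset le I"
    using infinite_countable_subset by blast
  have qT: "\<And>n. q n \<in> LMset le I" "\<And>n. snd (q n) > 0"
    "\<And>n q'. q' \<in> LMset le I \<Longrightarrow> pdiv q' (q n) \<Longrightarrow> pdiv (q n) q'"
    using q(2) unfolding Minset_def by auto
  obtain r where r: "strict_mono r" "\<forall>n. \<exists>e. fst (q (r (Suc n))) = e + fst (q (r n))"
    using dickson[of "\<lambda>n. fst (q n)" l] LMset_props(1)[OF qT(1)] by blast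
  define c where "c n = snd (q (r n))" for n
  have cpos: "c n > 0" for n unfolding c_def using qT(2) by simp
  have cdvd: "c (Suc n) dvd c n" for n
  proof -
    obtain e where e: "fst (q (r (Suc n))) = e + fst (q (r n))" using r(2) by blast
    let ?m0 = "fst (q (r n))" and ?m1 = "fst (q (r (Suc n)))"
    have em: "e \<in> monoms l" using LMset_props(1)[OF qT(1)[of "r (Suc n)"]] e monoms_summand[of ?m0 e]
      by (simp add: add.commute)
    have "(?m0, c n) \<in> LMset le I" using qT(1)[of "r n"] unfolding c_def by simp
    hence "(?m0 + e, c n * 1) \<in> LMset le I" using LMset_shift[OF _ em, of ?m0 "c n" 1] by simp
    hence A: "(?m1, c n) \<in> LMset le I" using e by (simp add: add.commute)
    have B: "(?m1, c (Suc n)) \<in> LMset le I" using qT(1)[of "r (Suc n)"] unfolding c_def by simp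
    have G: "(?m1, gcd (c n) (c (Suc n))) \<in> LMset le I" using LMset_gcd[OF A B] .
    have "pdiv (?m1, gcd (c n) (c (Suc n))) (q (r (Suc n)))"
      unfolding pdiv_def c_def by (auto intro: exI[of _ 0])
    hence "pdiv (q (r (Suc n))) (?m1, gcd (c n) (c (Suc n)))" using qT(3)[OF G] by blast
    hence "c (Suc n) dvd gcd (c n) (c (Suc n))" unfolding pdiv_def c_def by simp
    then show ?thesis by (meson dvd_trans gcd_dvd1)
  qed
  have "\<exists>n. c (Suc n) = c n"
  proof (rule ccontr)
    assume "\<not> (\<exists>n. c (Suc n) = c n)"
    hence lt: "c (Suc n) < c n" for n using cdvd[of n] cpos[of n] cpos[of "Suc n"] zdvd_imp_le
      by (metis order_le_less)
    have "c n + int n \<le> c 0" for n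
    proof (induction n)
      case (Suc n) then show ?case using lt[of n] by simp
    qed simp
    from this[of "nat (c 0)"] cpos[of "nat (c 0)"] cpos[of 0] show False by simp
  qed
  then obtain n where n: "c (Suc n) = c n" by blast
  obtain e where e: "fst (q (r (Suc n))) = e + fst (q (r n))" using r(2) by blast
  have "pdiv (q (r n)) (q (r (Suc n)))" unfolding pdiv_def using e n unfolding c_def by auto
  hence "pdiv (q (r (Suc n))) (q (r n))" using qT(3) qT(1) by blast
  then obtain e' where e': "fst (q (r n)) = e' + fst (q (r (Suc n)))" unfolding pdiv_def by blast
  have "fst (q (r n)) = fst (q (r (Suc n)))" using monom_antisym[OF e e'] .
  hence "q (r n) = q (r (Suc n))" using n unfolding c_def by (simp add: prod_eq_iff)
  hence "r n = r (Suc n)" using q(1) by (simp add: inj_eq)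
  thus False using strict_monoD[OF r(1), of n "Suc n"] by simp
qed

lemma Minset_cover:
  assumes "q \<in> LMset le I" shows "\<exists>q'\<in>Minset le I. pdiv q' q"
proof -
  have "\<forall>c. (m, c) \<in> LMset le I \<longrightarrow> (\<exists>q'\<in>Minset le I. pdiv q' (m, c))" for m
  proof (induction m rule: wf_induct[OF wf_tless[OF TO]])
    case (1 m)
    show ?case
    proof (intro allI impI)
      fix c assume "(m, c) \<in> LMset le I"
      then show "\<exists>q'\<in>Minset le I. pdiv q' (m, c)"
      proof (induction "nat \<bar>c\<bar>" arbitrary: c rule: less_induct)
        case less
        have mm: "m \<in> monoms l" "c \<noteq> 0" using LMset_props[OF less.prems] by auto
        have c0T: "(m, \<bar>c\<bar>) \<in> LMset le I"
        proof (cases "c \<ge> 0")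
          case True then show ?thesis using less.prems by simp
        next
          case False then show ?thesis using LMset_shift[OF less.prems monoms_zero, of "-1"] by simp
        qed
        have c0d: "pdiv (m, \<bar>c\<bar>) (m, c)" unfolding pdiv_def by (auto intro: exI[of _ 0])
        show ?case
        proof (cases "\<forall>q'\<in>LMset le I. pdiv q' (m, \<bar>c\<bar>) \<longrightarrow> pdiv (m, \<bar>c\<bar>) q'")
          case True
          hence "(m, \<bar>c\<bar>) \<in> Minset le I" unfolding Minset_def using c0T mm by auto
          then show ?thesis using c0d by blast
        next
          case False
          then obtain m' c' where q': "(m', c') \<in> LMset le I" "pdiv (m', c') (m, \<bar>c\<bar>)"
            "\<not> pdiv (m, \<bar>c\<bar>) (m', c')" by auto
          have mm': "m' \<in> monoms l" "c' \<noteq> 0" using LMset_props[OF q'(1)] by auto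
          obtain e where e: "m = e + m'" and cd: "c' dvd \<bar>c\<bar>" using q'(2) unfolding pdiv_def by auto
          show ?thesis
          proof (cases "m' = m")
            case True
            have "\<not> \<bar>c\<bar> dvd c'"
            proof
              assume "\<bar>c\<bar> dvd c'"
              hence "pdiv (m, \<bar>c\<bar>) (m', c')" unfolding pdiv_def using True
                by (metis add_0 fst_conv snd_conv)
              thus False using q'(3) by blast
            qed
            have "c' dvd c" using cd by simp
            hence le: "\<bar>c'\<bar> \<le> \<bar>c\<bar>" using dvd_imp_le_int[of c c'] mm(2) by simp
            have "\<bar>c'\<bar> \<noteq> \<bar>c\<bar>"
            proof
              assume "\<bar>c'\<bar> = \<bar>c\<bar>"
              hence "\<bar>c\<bar> dvd c'" by (metis abs_dvd_iff dvd_refl)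
              thus False using \<open>\<not> \<bar>c\<bar> dvd c'\<close> by blast
            qed
            hence "\<bar>c'\<bar> < \<bar>c\<bar>" using le by simp
            hence "nat \<bar>c'\<bar> < nat \<bar>c\<bar>" by simp
            then obtain q'' where "q'' \<in> Minset le I" "pdiv q'' (m, c')"
              using less.hyps[of c'] q'(1) True by blast
            then show ?thesis using pdiv_trans[OF _ pdiv_trans[OF q'(2) c0d]] True by blast
          next
            case False
            have em: "e \<in> monoms l" using mm(1) e monoms_summand[of m' e] by (simp add: add.commute)
            have "(m', m) \<in> tless l le" unfolding tless_def
              using False mm mm' term_order_dvd_le[OF TO mm'(1) em] e by auto
            then obtain q'' where "q'' \<in> Minset le I" "pdiv q'' (m', c')" using 1 q'(1) by blast
            then show ?thesis using pdiv_trans[OF _ pdiv_trans[OF q'(2) c0d]] by blast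
          qed
        qed
      qed
    qed
  qed
  then show ?thesis using assms by (cases q) auto
qed

lemma GB_exists: "\<exists>G. min_strong_GB l le I G"
proof -
  define G where "G = wit le I ` Minset le I"
  have MT: "\<And>q. q \<in> Minset le I \<Longrightarrow> q \<in> LMset le I" unfolding Minset_def by auto
  have fin: "finite G" unfolding G_def using Minset_finite by simp
  have GI: "G \<subseteq> I - {0}"
  proof
    fix g assume "g \<in> G"
    then obtain q where q: "q \<in> Minset le I" "g = wit le I q" unfolding G_def by blast
    show "g \<in> I - {0}" using wit_spec(1,2)[OF MT[OF q(1)]] q(2) by simp
  qed
  have GP: "G \<subseteq> polys l" using GI inI_polys by blast
  have LMf: "LM le f = sg (fst (lterm le f, lcoeff le f)) (snd (lterm le f, lcoeff le f))" for f
    unfolding LM_def by simp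
  have LMw: "q \<in> LMset le I \<Longrightarrow> LM le (wit le I q) = sg (fst q) (snd q)" for q
    unfolding LM_def using wit_spec by simp
  have cov: "\<forall>f\<in>I - {0}. \<exists>g\<in>G. pdvd l (LM le g) (LM le f)"
  proof
    fix f assume f: "f \<in> I - {0}"
    let ?q = "(lterm le f, lcoeff le f)"
    have qT: "?q \<in> LMset le I" using f LMset_I by blast
    obtain q' where q': "q' \<in> Minset le I" "pdiv q' ?q" using Minset_cover[OF qT] by blast
    have "pdvd l (sg (fst q') (snd q')) (sg (fst ?q) (snd ?q))"
      using pdvd_single_iff[OF LMset_props(1)[OF MT[OF q'(1)]] LMset_props(1)[OF qT]
          LMset_props(2)[OF MT[OF q'(1)]] LMset_props(2)[OF qT]] q'(2) by (cases q') simp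
    then show "\<exists>g\<in>G. pdvd l (LM le g) (LM le f)"
      using LMw[OF MT[OF q'(1)]] LMf[of f] q'(1) unfolding G_def by (intro bexI[of _ "wit le I q'"]) auto
  qed
  have anti: "\<forall>g\<in>G. \<forall>g'\<in>G. g \<noteq> g' \<longrightarrow> \<not> pdvd l (LM le g) (LM le g')"
  proof (intro ballI impI notI)
    fix g g' assume "g \<in> G" "g' \<in> G" "g \<noteq> g'" and dv: "pdvd l (LM le g) (LM le g')"
    then obtain q q' where q: "q \<in> Minset le I" "g = wit le I q" and q': "q' \<in> Minset le I" "g' = wit le I q'"
      unfolding G_def by blast
    have "q \<noteq> q'" using q q' \<open>g \<noteq> g'\<close> by blast
    have "pdvd l (sg (fst q) (snd q)) (sg (fst q') (snd q'))" using dv LMw MT q q' by simp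
    hence "pdiv (fst q, snd q) (fst q', snd q')"
      using pdvd_single_iff[OF LMset_props(1)[OF MT[OF q(1)]] LMset_props(1)[OF MT[OF q'(1)]]
          LMset_props(2)[OF MT[OF q(1)]] LMset_props(2)[OF MT[OF q'(1)]]] by blast
    hence d1: "pdiv q q'" by simp
    have "\<forall>q''\<in>LMset le I. pdiv q'' q' \<longrightarrow> pdiv q' q''" using q'(1) unfolding Minset_def by simp
    hence d2: "pdiv q' q" using MT[OF q(1)] d1 by blast
    have "\<exists>e. fst q' = e + fst q" using d1 unfolding pdiv_def by simp
    then obtain e where e: "fst q' = e + fst q" by blast
    have "\<exists>e. fst q = e + fst q'" using d2 unfolding pdiv_def by simp
    then obtain e' where e': "fst q = e' + fst q'" by blast
    have "fst q = fst q'" using monom_antisym[OF e e'] by simp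
    moreover have "snd q = snd q'"
    proof (rule zdvd_antisym_nonneg)
      show "0 \<le> snd q" "0 \<le> snd q'" using q(1) q'(1) unfolding Minset_def by auto
      show "snd q dvd snd q'" "snd q' dvd snd q" using d1 d2 unfolding pdiv_def by auto
    qed
    ultimately show False using \<open>q \<noteq> q'\<close> by (simp add: prod_eq_iff)
  qed
  have gen: "ideal_gen l G = I"
  proof
    show "ideal_gen l G \<subseteq> I" using ideal_gen_subset[OF ID] GI by blast
  next
    have IG: "is_ideal l (ideal_gen l G)" using is_ideal_ideal_gen[OF GP] .
    have "\<forall>f. f \<in> I \<longrightarrow> f \<noteq> 0 \<longrightarrow> lterm le f = t \<longrightarrow> f \<in> ideal_gen l G" for t
    proof (induction t rule: wf_induct[OF wf_tless[OF TO]])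
      case (1 t)
      show ?case
      proof (intro allI impI)
        fix f assume f: "f \<in> I" "f \<noteq> 0" "lterm le f = t"
        let ?q = "(lterm le f, lcoeff le f)"
        have qT: "?q \<in> LMset le I" using f LMset_I by blast
        obtain q' where q': "q' \<in> Minset le I" "pdiv q' ?q" using Minset_cover[OF qT] by blast
        obtain e where e: "t = e + fst q'" and cd: "snd q' dvd lcoeff le f"
          using q'(2) f(3) unfolding pdiv_def by auto
        have tm: "t \<in> monoms l" using LMset_props(1)[OF qT] f(3) by simp
        have em: "e \<in> monoms l" using tm e monoms_summand[of "fst q'" e] by (simp add: add.commute)
        define d where "d = lcoeff le f div snd q'"
        have dd: "lcoeff le f = snd q' * d" using cd unfolding d_def by simp
        have d0: "d \<noteq> 0" using dd lcoeff_nz[OF TO inI_polys[OF f(1)] f(2)] by auto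
        let ?g = "wit le I q'"
        have g: "?g \<in> I" "?g \<noteq> 0" "lterm le ?g = fst q'" "lcoeff le ?g = snd q'"
          using wit_spec[OF MT[OF q'(1)]] by auto
        let ?h = "?g * sg e d"
        have h: "?h \<in> polys l" "?h \<noteq> 0" "lterm le ?h = t" "lcoeff le ?h = lcoeff le f"
          using monmult_props[OF TO inI_polys[OF g(1)] g(2) em d0] g e dd by (auto simp: add.commute)
        have hI: "?h \<in> I" using is_idealD(4)[OF ID polys_single[OF em] g(1)] by (simp add: mult.commute)
        have gG: "?g \<in> ideal_gen l G" using ideal_gen_base[OF fin] q'(1) unfolding G_def by blast
        have hG: "?h \<in> ideal_gen l G" using is_idealD(4)[OF IG polys_single[OF em] gG]
          by (simp add: mult.commute)
        let ?f' = "f - ?h"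
        have f'I: "?f' \<in> I" using is_ideal_diff[OF ID f(1) hI] .
        have ff: "f = ?f' + ?h" by simp
        show "f \<in> ideal_gen l G"
        proof (cases "?f' = 0")
          case True then show ?thesis using hG ff by simp
        next
          case False
          let ?t' = "lterm le ?f'"
          have t'k: "?t' \<in> ks ?f'" using lterm_spec(1)[OF TO inI_polys[OF f'I] False] .
          hence "?t' \<in> ks f \<or> ?t' \<in> ks ?h" using keys_diff[of f ?h] by blast
          hence le: "le ?t' t"
            using lterm_spec(2)[OF TO inI_polys[OF f(1)] f(2)] lterm_spec(2)[OF TO h(1) h(2)] f(3) h(3)
            by auto
          have "lk ?f' t = 0" using f(3) h(3,4) unfolding lcoeff_def by (simp add: lookup_minus)
          hence ne: "?t' \<noteq> t" using t'k by (auto simp: in_keys_iff)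
          have "(?t', t) \<in> tless l le" unfolding tless_def
            using le ne tm lterm_monoms[OF TO inI_polys[OF f'I] False] by auto
          hence "?f' \<in> ideal_gen l G" using 1 f'I False by blast
          then show ?thesis using ff is_idealD(3)[OF IG _ hG] by metis
        qed
      qed
    qed
    then show "I \<subseteq> ideal_gen l G" using is_idealD(2)[OF IG] by blast
  qed
  show ?thesis unfolding min_strong_GB_def using fin GI gen cov anti by (intro exI[of _ G]) blast
qed

end

section \<open>Linear algebra over Q\<close>

interpretation QV: vector_space "(\<lambda>c x. (\<lambda>k. c * x k)) :: rat \<Rightarrow> (nat \<Rightarrow> rat) \<Rightarrow> (nat \<Rightarrow> rat)"
  by unfold_locales (auto simp: fun_eq_iff algebra_simps)

lemma sum_fun_apply: "(\<Sum>v\<in>A. (f v :: nat \<Rightarrow> rat)) k = (\<Sum>v\<in>A. f v k)"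
  by (induction A rule: infinite_finite_induct) auto

definition dotp :: "nat \<Rightarrow> (nat \<Rightarrow> int) \<Rightarrow> (nat \<Rightarrow> rat) \<Rightarrow> rat" where
  "dotp l a x = (\<Sum>k<l. of_int (a k) * x k)"

definition E :: "nat \<Rightarrow> nat \<Rightarrow> rat" where
  "E j = (\<lambda>k. if k = j then 1 else 0)"

lemma dotp_E: "j < l \<Longrightarrow> dotp l a (E j) = of_int (a j)"
  unfolding dotp_def E_def by (simp add: if_distrib[of "\<lambda>x. _ * x"] sum.delta cong: if_cong)

lemma hyperplane_iff: "x \<in> hyperplane l a \<longleftrightarrow> x \<in> qvecs l \<and> dotp l a x = 0"
  unfolding hyperplane_def dotp_def by simp

lemma E_inj: "E i = E j \<Longrightarrow> i = j"
  unfolding E_def by (metis one_neq_zero)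

lemma lin_indep_distinct:
  assumes "lin_indep_list vs" shows "distinct vs"
proof (rule ccontr)
  assume "\<not> distinct vs"
  then obtain i j where ij: "i < length vs" "j < length vs" "i \<noteq> j" "vs ! i = vs ! j"
    by (auto simp: distinct_conv_nth)
  define c where "c t = (if t = i then 1 else 0) - (if t = j then 1 else (0::rat))" for t
  have "(\<lambda>k. \<Sum>t<length vs. c t * (vs ! t) k) = (\<lambda>k. 0)"
  proof
    fix k
    have "(\<Sum>t<length vs. c t * (vs ! t) k)
        = (\<Sum>t<length vs. (if t = i then (vs ! t) k else 0)) - (\<Sum>t<length vs. (if t = j then (vs ! t) k else 0))"
      unfolding c_def by (simp add: left_diff_distrib sum_subtractf if_distrib[of "\<lambda>x. x * _"] cong: if_cong)
    also have "\<dots> = 0" using ij by (simp add: sum.delta)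
    finally show "(\<Sum>t<length vs. c t * (vs ! t) k) = 0" .
  qed
  hence "c i = 0" using assms ij(1) unfolding lin_indep_list_def by blast
  thus False using ij(3) unfolding c_def by simp
qed

lemma qvecs_span:
  assumes "x \<in> qvecs l" shows "x \<in> QV.span (E ` {..<l})"
proof -
  have "x = (\<Sum>j<l. (\<lambda>k. x j * E j k))"
  proof
    fix k
    show "x k = (\<Sum>j<l. (\<lambda>k. x j * E j k)) k"
    proof (cases "k < l")
      case True then show ?thesis unfolding sum_fun_apply E_def
        by (simp add: if_distrib[of "\<lambda>y. _ * y"] sum.delta' cong: if_cong)
    next
      case False then show ?thesis using assms unfolding sum_fun_apply E_def qvecs_def
        by (auto intro!: sum.neutral)
    qed
  qed
  also have "\<dots> \<in> QV.span (E ` {..<l})"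
    by (intro QV.span_sum QV.span_scale QV.span_base) auto
  finally show ?thesis .
qed

context
  fixes l :: nat and a b :: "nat \<Rightarrow> int" and u s :: nat
  assumes us: "u < l" "s < l" "u \<noteq> s" and det: "a u * b s - a s * b u \<noteq> 0"
begin

lemma det_rat: "of_int (a u) * of_int (b s) - of_int (a s) * of_int (b u) \<noteq> (0::rat)"
  using det by (metis of_int_0_eq_iff of_int_diff of_int_mult)

lemma solve2:
  fixes x y :: rat
  assumes "x * of_int (a u) + y * of_int (a s) = 0" "x * of_int (b u) + y * of_int (b s) = 0"
  shows "x = 0 \<and> y = 0"
proof -
  have "x * (of_int (a u) * of_int (b s) - of_int (a s) * of_int (b u)) = 0"
  proof -
    have "x * (of_int (a u) * of_int (b s) - of_int (a s) * of_int (b u))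
       = (x * of_int (a u) + y * of_int (a s)) * of_int (b s) - (x * of_int (b u) + y * of_int (b s)) * of_int (a s)"
      by (simp add: algebra_simps)
    then show ?thesis using assms by simp
  qed
  moreover have "y * (of_int (a u) * of_int (b s) - of_int (a s) * of_int (b u)) = 0"
  proof -
    have "y * (of_int (a u) * of_int (b s) - of_int (a s) * of_int (b u))
       = (x * of_int (b u) + y * of_int (b s)) * of_int (a u) - (x * of_int (a u) + y * of_int (a s)) * of_int (b u)"
      by (simp add: algebra_simps)
    then show ?thesis using assms by simp
  qed
  ultimately show ?thesis using det_rat by simp
qed

abbreviation "W \<equiv> hyperplane l a \<inter> hyperplane l b"

lemma E_notin_W: "E u \<notin> W" "E s \<notin> W"
proof -
  show "E u \<notin> W"
  proof
    assume "E u \<in> W"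
    hence "dotp l a (E u) = 0" "dotp l b (E u) = 0" using hyperplane_iff by auto
    hence "of_int (a u) = (0::rat)" "of_int (b u) = (0::rat)"
      using dotp_E[OF us(1)] by simp_all
    thus False using det by simp
  qed
  show "E s \<notin> W"
  proof
    assume "E s \<in> W"
    hence "dotp l a (E s) = 0" "dotp l b (E s) = 0" using hyperplane_iff by auto
    hence "of_int (a s) = (0::rat)" "of_int (b s) = (0::rat)"
      using dotp_E[OF us(2)] by simp_all
    thus False using det by simp
  qed
qed

lemma upper:
  assumes "lin_indep_list vs" "set vs \<subseteq> W"
  shows "length vs + 2 \<le> l"
proof -
  have dist: "distinct vs" using lin_indep_distinct[OF assms(1)] .
  define S where "S = insert (E u) (insert (E s) (set vs))"
  have nu: "E u \<notin> set vs" "E s \<notin> set vs" using E_notin_W assms(2) by auto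
  have neq: "E u \<noteq> E s" using E_inj us(3) by metis
  have cardS: "card S = length vs + 2" unfolding S_def using nu neq distinct_card[OF dist] by simp
  have finS: "finite S" unfolding S_def by simp
  have indep: "QV.independent S"
  proof
    assume "QV.dependent S"
    then obtain w where w: "\<exists>v\<in>S. w v \<noteq> 0" "(\<Sum>v\<in>S. (\<lambda>k. w v * v k)) = 0"
      using QV.dependent_finite[OF finS] by blast
    have pw: "(\<Sum>v\<in>S. w v * v k) = 0" for k
      using fun_cong[OF w(2), of k] unfolding sum_fun_apply by simp
    have dotsum: "(\<Sum>v\<in>S. w v * dotp l c v) = 0" for c
    proof -
      have "(\<Sum>v\<in>S. w v * dotp l c v) = (\<Sum>k<l. of_int (c k) * (\<Sum>v\<in>S. w v * v k))"
        unfolding dotp_def by (simp add: sum_distrib_left sum_distrib_right algebra_simps sum.swap[of _ S])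
      also have "\<dots> = 0" using pw by simp
      finally show ?thesis .
    qed
    have vs0: "dotp l c v = 0" if "v \<in> set vs" "c = a \<or> c = b" for v c
      using that assms(2) hyperplane_iff by auto
    have split: "(\<Sum>v\<in>S. w v * dotp l c v) = w (E u) * dotp l c (E u) + w (E s) * dotp l c (E s)
        + (\<Sum>v\<in>set vs. w v * dotp l c v)" for c
      unfolding S_def using nu neq by (simp add: sum.insert_if)
    have "w (E u) * of_int (a u) + w (E s) * of_int (a s) = 0"
      using dotsum[of a] split[of a] vs0[of _ a] dotp_E[OF us(1)] dotp_E[OF us(2)] by simp
    moreover have "w (E u) * of_int (b u) + w (E s) * of_int (b s) = 0"
      using dotsum[of b] split[of b] vs0[of _ b] dotp_E[OF us(1)] dotp_E[OF us(2)] by simp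
    ultimately have wz: "w (E u) = 0" "w (E s) = 0" using solve2 by blast+
    have pw2: "(\<Sum>v\<in>set vs. w v * v k) = 0" for k
      using pw[of k] wz nu neq unfolding S_def by (simp add: sum.insert_if)
    have reidx: "(\<Sum>i<length vs. w (vs ! i) * (vs ! i) k) = (\<Sum>v\<in>set vs. w v * v k)" for k
    proof -
      have inj: "inj_on (nth vs) {..<length vs}" using inj_on_nth[OF dist] by simp
      have im: "nth vs ` {..<length vs} = set vs" by (auto simp: set_conv_nth)
      show ?thesis using sum.reindex[OF inj, of "\<lambda>v. w v * v k"] im by simp
    qed
    have eq: "(\<lambda>k. \<Sum>i<length vs. w (vs ! i) * (vs ! i) k) = (\<lambda>k. 0)"
      using reidx pw2 by simp
    have "\<forall>i<length vs. w (vs ! i) = 0"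
      using assms(1)[unfolded lin_indep_list_def, rule_format, of "\<lambda>i. w (vs ! i)", OF eq] by simp
    hence "\<forall>v\<in>set vs. w v = 0" by (auto simp: set_conv_nth)
    thus False using w(1) wz unfolding S_def by auto
  qed
  have sub: "S \<subseteq> QV.span (E ` {..<l})"
  proof -
    have "set vs \<subseteq> qvecs l" using assms(2) unfolding hyperplane_def by auto
    moreover have "E u \<in> QV.span (E ` {..<l})" "E s \<in> QV.span (E ` {..<l})"
      using us by (auto intro: QV.span_base)
    ultimately show ?thesis unfolding S_def using qvecs_span by auto
  qed
  have "card S \<le> card (E ` {..<l})" using QV.independent_span_bound[OF _ indep sub] by simp
  also have "\<dots> \<le> l" using card_image_le[of "{..<l}" E] by simp
  finally show ?thesis using cardS by simp
qed

lemma dotp_lin: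
  assumes "k < l"
  shows "dotp l c (\<lambda>j. E k j + x * E u j + y * E s j) = of_int (c k) + x * of_int (c u) + y * of_int (c s)"
proof -
  have "dotp l c (\<lambda>j. E k j + x * E u j + y * E s j) = dotp l c (E k) + x * dotp l c (E u) + y * dotp l c (E s)"
    unfolding dotp_def by (simp add: algebra_simps sum.distrib sum_distrib_left)
  then show ?thesis using dotp_E assms us by simp
qed

lemma lower: "\<exists>vs. length vs = l - 2 \<and> set vs \<subseteq> W \<and> lin_indep_list vs"
proof -
  define D :: rat where "D = of_int (a u) * of_int (b s) - of_int (a s) * of_int (b u)"
  have D0: "D \<noteq> 0" using det_rat unfolding D_def .
  define al where "al k = (of_int (a s) * of_int (b k) - of_int (a k) * of_int (b s)) / D" for k
  define be where "be k = (of_int (a k) * of_int (b u) - of_int (a u) * of_int (b k)) / D" for k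
  define z where "z k = (\<lambda>j. E k j + al k * E u j + be k * E s j)" for k
  define ks where "ks = filter (\<lambda>k. k \<noteq> u \<and> k \<noteq> s) [0..<l]"
  have dks: "distinct ks" unfolding ks_def by simp
  have sks: "set ks = {..<l} - {u, s}" unfolding ks_def by auto
  have lks: "length ks = l - 2"
  proof -
    have "length ks = card (set ks)" using distinct_card[OF dks] by simp
    also have "\<dots> = card {..<l} - card {u, s}" unfolding sks using us by (intro card_Diff_subset) auto
    also have "\<dots> = l - 2" using us by simp
    finally show ?thesis .
  qed
  have zW: "z k \<in> W" if "k < l" for k
  proof -
    have q: "z k \<in> qvecs l" unfolding qvecs_def z_def E_def using that us by auto
    have "dotp l a (z k) = of_int (a k) + al k * of_int (a u) + be k * of_int (a s)"
      unfolding z_def using dotp_lin[OF that] .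
    also have "\<dots> = 0" unfolding al_def be_def using D0
      by (simp add: field_simps, simp add: D_def algebra_simps)
    finally have da: "dotp l a (z k) = 0" .
    have "dotp l b (z k) = of_int (b k) + al k * of_int (b u) + be k * of_int (b s)"
      unfolding z_def using dotp_lin[OF that] .
    also have "\<dots> = 0" unfolding al_def be_def using D0
      by (simp add: field_simps, simp add: D_def algebra_simps)
    finally have db: "dotp l b (z k) = 0" .
    show ?thesis using q da db hyperplane_iff by auto
  qed
  define vs where "vs = map z ks"
  have "length vs = l - 2" unfolding vs_def using lks by simp
  moreover have "set vs \<subseteq> W" unfolding vs_def using zW sks by auto
  moreover have "lin_indep_list vs"
    unfolding lin_indep_list_def
  proof (intro allI impI)
    fix c :: "nat \<Rightarrow> rat" and i0
    assume eq: "(\<lambda>k. \<Sum>i<length vs. c i * (vs ! i) k) = (\<lambda>k. 0)" and i0: "i0 < length vs"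
    have i0k: "i0 < length ks" using i0 unfolding vs_def by simp
    have kin: "ks ! i0 \<in> set ks" using i0k by simp
    hence ne: "ks ! i0 \<noteq> u" "ks ! i0 \<noteq> s" using sks by auto
    have "(\<Sum>i<length vs. c i * (vs ! i) (ks ! i0)) = (\<Sum>i<length ks. if i = i0 then c i else 0)"
    proof (rule sum.cong)
      show "{..<length vs} = {..<length ks}" unfolding vs_def by simp
    next
      fix i assume "i \<in> {..<length ks}"
      hence ik: "i < length ks" by simp
      have "(vs ! i) (ks ! i0) = (if ks ! i0 = ks ! i then 1 else 0)"
        unfolding vs_def using ik ne by (simp add: z_def E_def)
      also have "\<dots> = (if i = i0 then 1 else 0)" using nth_eq_iff_index_eq[OF dks i0k ik] by auto
      finally show "c i * (vs ! i) (ks ! i0) = (if i = i0 then c i else 0)" by simp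
    qed
    also have "\<dots> = c i0" using i0k by simp
    finally show "c i0 = 0" using fun_cong[OF eq, of "ks ! i0"] by simp
  qed
  ultimately show ?thesis by blast
qed

lemma codim_W: "codim l W = 2"
proof -
  have "qdim W = l - 2"
    unfolding qdim_def
  proof (rule Greatest_equality)
    show "\<exists>vs. length vs = l - 2 \<and> set vs \<subseteq> W \<and> lin_indep_list vs" using lower .
  next
    fix d assume "\<exists>vs. length vs = d \<and> set vs \<subseteq> W \<and> lin_indep_list vs"
    then show "d \<le> l - 2" using upper by fastforce
  qed
  then show ?thesis unfolding codim_def using us by simp
qed

end

section \<open>Linear forms\<close>

lemma var_inj: "(sg j 1 :: monom) = sg k 1 \<Longrightarrow> j = k"
  by (metis lookup_single_eq lookup_single_not_eq one_neq_zero)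

lemma var_not_dvd: "j \<noteq> k \<Longrightarrow> \<not> (\<exists>e. (sg k 1 :: monom) = e + sg j 1)"
proof
  assume "j \<noteq> k" "\<exists>e. (sg k 1 :: monom) = e + sg j 1"
  then obtain e where e: "(sg k 1 :: monom) = e + sg j 1" by blast
  have "lk (sg k 1 :: monom) j = lk e j + lk (sg j 1 :: monom) j"
    using arg_cong[OF e, of "\<lambda>m. lk m j"] by (simp only: lookup_add)
  thus False using \<open>j \<noteq> k\<close> by (simp add: lookup_single)
qed

lemma zero_not_dvd: "\<not> (\<exists>e. (0 :: monom) = e + sg j 1)"
proof
  assume "\<exists>e. (0 :: monom) = e + sg j 1"
  then obtain e where e: "(0 :: monom) = e + sg j 1" by blast
  have "lk (0 :: monom) j = lk e j + lk (sg j 1 :: monom) j"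
    using arg_cong[OF e, of "\<lambda>m. lk m j"] by (simp only: lookup_add)
  thus False by simp
qed

lemma var_monoms: "k < l \<Longrightarrow> sg k 1 \<in> monoms l"
  unfolding monoms_def by simp

lemma lookup_linform:
  "lk (linform l a) m = (\<Sum>j<l. if sg j 1 = m then a j else 0)"
  unfolding linform_def lookup_sum lookup_single when_def by simp

lemma lookup_linform_var: "k < l \<Longrightarrow> lk (linform l a) (sg k 1) = a k"
proof -
  assume k: "k < l"
  have "(\<Sum>j<l. if sg j 1 = (sg k 1 :: monom) then a j else 0) = (\<Sum>j<l. if j = k then a j else 0)"
    by (rule sum.cong) (use var_inj in blast, metis var_inj)
  then show ?thesis unfolding lookup_linform using k by simp
qed

lemma lookup_linform_nonvar: "\<forall>k<l. m \<noteq> sg k 1 \<Longrightarrow> lk (linform l a) m = 0"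
  unfolding lookup_linform by (intro sum.neutral) auto

lemma keys_linform: "m \<in> ks (linform l a) \<Longrightarrow> \<exists>k<l. m = sg k 1"
proof (rule ccontr)
  assume "m \<in> ks (linform l a)" "\<not> (\<exists>k<l. m = sg k 1)"
  then show False using lookup_linform_nonvar[of l m a] by (simp add: in_keys_iff)
qed

lemma linform_polys: "linform l a \<in> polys l"
  unfolding polys_def using keys_linform var_monoms by blast

lemma lookup_mult_linform:
  "k < l \<Longrightarrow> lk (c * linform l a) (sg k 1) = lk c 0 * a k"
  "lk (c * linform l a) 0 = 0"
proof -
  have eq: "c * linform l a = (\<Sum>j<l. c * sg (sg j 1) (a j))"
    unfolding linform_def by (simp add: sum_distrib_left)
  assume k: "k < l"
  have "lk (c * linform l a) (sg k 1) = (\<Sum>j<l. lk (c * sg (sg j 1) (a j)) (sg k 1))"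
    unfolding eq lookup_sum ..
  also have "\<dots> = (\<Sum>j<l. if j = k then lk c 0 * a k else 0)"
  proof (rule sum.cong)
    fix j assume "j \<in> {..<l}"
    show "lk (c * sg (sg j 1) (a j)) (sg k 1) = (if j = k then lk c 0 * a k else 0)"
    proof (cases "j = k")
      case True
      then show ?thesis using lookup_mult_single_shift[of c "sg k 1" "a k" 0] by simp
    next
      case False
      then show ?thesis using lookup_mult_single_notdvd[OF var_not_dvd[OF False]] by simp
    qed
  qed simp
  also have "\<dots> = lk c 0 * a k" using k by simp
  finally show "lk (c * linform l a) (sg k 1) = lk c 0 * a k" .
next
  have eq: "c * linform l a = (\<Sum>j<l. c * sg (sg j 1) (a j))"
    unfolding linform_def by (simp add: sum_distrib_left)
  show "lk (c * linform l a) 0 = 0"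
    unfolding eq lookup_sum using lookup_mult_single_notdvd[OF zero_not_dvd] by simp
qed

lemma mon_le_var:
  assumes "(sg u 1 :: monom) = e + t" shows "t = 0 \<or> t = sg u 1"
proof -
  have k: "lk t k = 0" if "k \<noteq> u" for k
    using arg_cong[OF assms, of "\<lambda>m. lk m k"] that by (simp add: lookup_add lookup_single)
  have "lk e u + lk t u = 1"
    using arg_cong[OF assms, of "\<lambda>m. lk m u"] by (simp add: lookup_add)
  hence "lk t u = 0 \<or> lk t u = 1" by arith
  then show ?thesis
  proof
    assume "lk t u = 0"
    have "t = 0"
    proof (rule poly_mapping_eqI)
      fix k' show "lk t k' = lk 0 k'" using k[of k'] \<open>lk t u = 0\<close> by (cases "k' = u") simp_all
    qed
    then show ?thesis ..
  next
    assume "lk t u = 1"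
    have "t = sg u 1"
    proof (rule poly_mapping_eqI)
      fix k' show "lk t k' = lk (sg u 1) k'" using k[of k'] \<open>lk t u = 1\<close>
        by (cases "k' = u") (simp_all add: lookup_single)
    qed
    then show ?thesis ..
  qed
qed

lemma ideal2_elem:
  assumes "A \<noteq> B" "f \<in> ideal_gen l {A, B}"
  shows "\<exists>cA cB. f = cA * A + cB * B"
proof -
  obtain c where "f = (\<Sum>g\<in>{A, B}. c g * g)" using assms(2) unfolding ideal_gen_def by blast
  then show ?thesis using assms(1) by auto
qed

lemma hyperplane_cong: "(\<And>k. k < l \<Longrightarrow> a k = b k) \<Longrightarrow> hyperplane l a = hyperplane l b"
  unfolding hyperplane_def by auto

lemma key_g:
  assumes TO: "term_order l le" and p: "prime p"
    and AB: "A = linform l a" "B = linform l b" "A \<noteq> B"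
    and cong: "\<forall>k<l. p dvd (a k - c * b k)"
    and g: "g \<in> ideal_gen l {A, B}" "g \<noteq> 0" "lterm le g = sg u' 1" "u' < l"
      "\<not> p dvd lk g (sg u' 1)"
  shows "\<not> p dvd b u'" "\<And>k. k < l \<Longrightarrow> le (sg u' 1) (sg k 1) \<Longrightarrow> k \<noteq> u' \<Longrightarrow> p dvd b k"
proof -
  obtain cA cB where gd: "g = cA * A + cB * B" using ideal2_elem[OF AB(3) g(1)] by blast
  define t where "t = lk cA 0 * c + lk cB 0"
  have lk: "lk g (sg k 1) = t * b k + lk cA 0 * (a k - c * b k)" if "k < l" for k
    unfolding gd lookup_add AB(1,2) lookup_mult_linform(1)[OF that] t_def by (simp add: algebra_simps)
  have iff: "p dvd lk g (sg k 1) \<longleftrightarrow> p dvd t * b k" if "k < l" for k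
  proof -
    have "p dvd lk cA 0 * (a k - c * b k)" using cong that by simp
    then show ?thesis unfolding lk[OF that] using dvd_add_left_iff by blast
  qed
  have nt: "\<not> p dvd t * b u'" using iff[OF g(4)] g(5) by simp
  then show "\<not> p dvd b u'" using dvd_mult[of p "b u'" t] by blast
  have ntt: "\<not> p dvd t" using nt dvd_mult2[of p t "b u'"] by blast
  fix k assume k: "k < l" "le (sg u' 1) (sg k 1)" "k \<noteq> u'"
  have gp: "g \<in> polys l" using g(1) is_ideal_ideal_gen[of "{A, B}" l] AB linform_polys
    unfolding is_ideal_def by blast
  have "sg k 1 \<noteq> (sg u' 1 :: monom)" using k(3) var_inj by metis
  hence "lk g (sg k 1) = 0" using below_lterm[OF TO gp var_monoms[OF k(1)]] k(2) g(3) by simp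
  hence "p dvd t * b k" using iff[OF k(1)] by simp
  then show "p dvd b k" using ntt prime_dvd_mult_iff[OF p] by blast
qed

lemma bad_pair:
  assumes arr: "arrangement l n alpha" and TO: "term_order l le" and p: "prime p"
    and luck: "lucky_k l n alpha le 2 p"
    and ij: "i < n" "j < n" "i \<noteq> j"
    and cg: "\<forall>k<l. [alpha i k = c * alpha j k] (mod p)"
  shows False
proof -
  define a where "a = alpha i"
  define b where "b = alpha j"
  define A where "A = linform l a"
  define B where "B = linform l b"
  have anz: "\<exists>k<l. a k \<noteq> 0" "\<exists>k<l. b k \<noteq> 0" using arr ij unfolding arrangement_def a_def b_def by auto
  have Hne: "hyperplane l a \<noteq> hyperplane l b" using arr ij unfolding arrangement_def a_def b_def by auto
  have cong: "\<forall>k<l. p dvd (a k - c * b k)" using cg unfolding a_def b_def cong_iff_dvd_diff .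
  have AB: "A \<noteq> B"
  proof
    assume "A = B"
    hence "a k = b k" if "k < l" for k using lookup_linform_var[OF that, of a] lookup_linform_var[OF that, of b]
      unfolding A_def B_def by simp
    hence "hyperplane l a = hyperplane l b" using hyperplane_cong by blast
    thus False using Hne by simp
  qed
  have Ap: "A \<in> polys l" "B \<in> polys l" unfolding A_def B_def by (rule linform_polys)+
  define I where "I = ideal_gen l {A, B}"
  have ID: "is_ideal l I" unfolding I_def using is_ideal_ideal_gen Ap by simp
  have AI: "A \<in> I" "B \<in> I" unfolding I_def using ideal_gen_base[of "{A, B}"] by auto
  have I0: "lk f 0 = 0" if fI: "f \<in> I" for f
  proof -
    obtain cA cB where "f = cA * A + cB * B" using ideal2_elem[OF AB fI[unfolded I_def]] by blast
    then show ?thesis unfolding A_def B_def by (simp add: lookup_add lookup_mult_linform(2))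
  qed
  obtain k0 where k0: "k0 < l" "a k0 \<noteq> 0" using anz by blast
  have A0: "A \<noteq> 0"
  proof
    assume "A = 0"
    hence "lk A (sg k0 1) = 0" by simp
    thus False using lookup_linform_var[OF k0(1)] k0(2) unfolding A_def by simp
  qed
  obtain u where u: "u < l" "lterm le A = sg u 1"
    using keys_linform lterm_spec(1)[OF TO Ap(1) A0] unfolding A_def by blast
  have au: "a u \<noteq> 0"
    using lterm_spec(1)[OF TO Ap(1) A0] u lookup_linform_var[OF u(1)] unfolding A_def by (simp add: in_keys_iff)
  define w where "w k = a u * b k - b u * a k" for k
  have "\<exists>s<l. w s \<noteq> 0"
  proof (rule ccontr)
    assume "\<not> (\<exists>s<l. w s \<noteq> 0)"
    hence pr: "a u * b k = b u * a k" if "k < l" for k using that unfolding w_def by auto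
    show False
    proof (cases "b u = 0")
      case True
      hence "b k = 0" if "k < l" for k using pr[OF that] au by simp
      thus False using anz(2) by blast
    next
      case False
      have "hyperplane l a = hyperplane l b"
      proof (rule set_eqI)
        fix x :: "nat \<Rightarrow> rat"
        have "(\<Sum>k<l. of_int (b k) * x k) * of_int (a u) = of_int (b u) * (\<Sum>k<l. of_int (a k) * x k)"
          unfolding sum_distrib_left sum_distrib_right
        proof (rule sum.cong)
          fix k assume "k \<in> {..<l}"
          hence "of_int (a u) * of_int (b k) = (of_int (b u) * of_int (a k) :: rat)"
            using pr[of k] by (metis lessThan_iff of_int_mult)
          then have "(of_int (a u) * of_int (b k)) * x k = (of_int (b u) * of_int (a k)) * x k"
            by simp
          then show "of_int (b k) * x k * of_int (a u) = of_int (b u) * (of_int (a k) * x k)"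
            by (simp only: ac_simps)
        qed simp
        then show "x \<in> hyperplane l a \<longleftrightarrow> x \<in> hyperplane l b"
          unfolding hyperplane_def using au False by auto
      qed
      thus False using Hne by simp
    qed
  qed
  then obtain s where s: "s < l" "w s \<noteq> 0" by blast
  have us: "u \<noteq> s" using s(2) unfolding w_def by auto
  have det: "a u * b s - a s * b u \<noteq> 0" using s(2) unfolding w_def by (simp add: algebra_simps)
  have codim: "codim l (hyperplane l a \<inter> hyperplane l b) = 2"
    using codim_W[OF u(1) s(1) us det] .
  have "lucky l le p (ideal_gen l ((\<lambda>i. linform l (alpha i)) ` {i, j}))"
    using luck unfolding lucky_k_def
  proof (elim allE[of _ "{i, j}"] impE)
    show "{i, j} \<subseteq> {..<n} \<and> card {i, j} = 2 \<and> codim l (\<Inter>i\<in>{i, j}. hyperplane l (alpha i)) = 2"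
      using ij codim unfolding a_def b_def by auto
  qed
  hence lucky: "lucky l le p I" unfolding I_def A_def B_def a_def b_def by simp
  obtain G where G: "min_strong_GB l le I G" using GB_exists[OF TO ID] by blast
  have Gl: "\<forall>g\<in>G. \<not> p dvd lcoeff le g" using lucky G unfolding lucky_def by blast
  have good: "\<exists>g. g \<in> I \<and> g \<noteq> 0 \<and> lterm le g = sg u' 1 \<and> \<not> p dvd lk g (sg u' 1)"
    if f: "f \<in> I" "f \<noteq> 0" "lterm le f = sg u' 1" "u' < l" for f u'
  proof -
    have fp: "f \<in> polys l" using f(1) is_idealD(1)[OF ID] by blast
    obtain g where g: "g \<in> G" "pdvd l (LM le g) (LM le f)"
      using G f(1,2) unfolding min_strong_GB_def by blast
    have gI: "g \<in> I" "g \<noteq> 0" using g(1) G unfolding min_strong_GB_def by auto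
    have gp: "g \<in> polys l" using gI(1) is_idealD(1)[OF ID] by blast
    have "pdiv (lterm le g, lcoeff le g) (lterm le f, lcoeff le f)"
      using g(2) pdvd_single_iff[OF lterm_monoms[OF TO gp gI(2)] lterm_monoms[OF TO fp f(2)]
          lcoeff_nz[OF TO gp gI(2)] lcoeff_nz[OF TO fp f(2)]] unfolding LM_def by blast
    then obtain e where e: "sg u' 1 = e + lterm le g" unfolding pdiv_def using f(3) by auto
    have "lterm le g \<noteq> 0"
    proof
      assume "lterm le g = 0"
      hence "lk g 0 \<noteq> 0" using lterm_spec(1)[OF TO gp gI(2)] by (simp add: in_keys_iff)
      thus False using I0[OF gI(1)] by simp
    qed
    hence lt: "lterm le g = sg u' 1" using mon_le_var[OF e] by blast
    have "\<not> p dvd lk g (lterm le g)" using Gl g(1) unfolding lcoeff_def by blast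
    hence "\<not> p dvd lk g (sg u' 1)" unfolding lt .
    then show ?thesis using gI lt by blast
  qed
  define f2 where "f2 = B * sg 0 (a u) - A * sg 0 (b u)"
  have f2I: "f2 \<in> I" unfolding f2_def
    using is_ideal_diff[OF ID is_idealD(4)[OF ID polys_single[OF monoms_zero] AI(2)]
        is_idealD(4)[OF ID polys_single[OF monoms_zero] AI(1)]] by (simp add: mult.commute)
  have lkf2: "lk f2 m = lk B m * a u - lk A m * b u" for m
    unfolding f2_def lookup_minus using lookup_mult_single_shift[of B 0 "a u" m]
      lookup_mult_single_shift[of A 0 "b u" m] by simp
  have f2p: "f2 \<in> polys l" using f2I is_idealD(1)[OF ID] by blast
  have "lk f2 (sg s 1) = w s"
    unfolding lkf2 A_def B_def lookup_linform_var[OF s(1)] w_def by (simp add: algebra_simps)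
  hence f20: "f2 \<noteq> 0" using s(2) by auto
  have "\<exists>v<l. lterm le f2 = sg v 1"
  proof (rule ccontr)
    assume "\<not> (\<exists>v<l. lterm le f2 = sg v 1)"
    hence "lk f2 (lterm le f2) = 0" unfolding lkf2 A_def B_def
      using lookup_linform_nonvar[of l "lterm le f2"] by auto
    thus False using lterm_spec(1)[OF TO f2p f20] by (simp add: in_keys_iff)
  qed
  then obtain v where v: "v < l" "lterm le f2 = sg v 1" by blast
  have "lk f2 (sg v 1) \<noteq> 0" using lterm_spec(1)[OF TO f2p f20] v(2) by (simp add: in_keys_iff)
  hence uv: "u \<noteq> v" unfolding lkf2 A_def B_def using lookup_linform_var[OF v(1)] by (auto simp: mult.commute)
  obtain g1 where g1: "g1 \<in> I" "g1 \<noteq> 0" "lterm le g1 = sg u 1" "\<not> p dvd lk g1 (sg u 1)"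
    using good[OF AI(1) A0 u(2) u(1)] by blast
  obtain g2 where g2: "g2 \<in> I" "g2 \<noteq> 0" "lterm le g2 = sg v 1" "\<not> p dvd lk g2 (sg v 1)"
    using good[OF f2I f20 v(2) v(1)] by blast
  note K1 = key_g[OF TO p A_def B_def AB cong g1(1)[unfolded I_def] g1(2,3) u(1) g1(4)]
  note K2 = key_g[OF TO p A_def B_def AB cong g2(1)[unfolded I_def] g2(2,3) v(1) g2(4)]
  have "le (sg u 1) (sg v 1) \<or> le (sg v 1) (sg u 1)"
    using term_orderD(4)[OF TO var_monoms[OF u(1)] var_monoms[OF v(1)]] .
  then show False
  proof
    assume "le (sg u 1) (sg v 1)"
    then show False using K1(2)[OF v(1)] uv K2(1) by auto
  next
    assume "le (sg v 1) (sg u 1)"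
    then show False using K2(2)[OF u(1)] uv K1(1) by auto
  qed
qed

theorem theorem6p3:
  fixes l n :: nat and alpha :: "nat \<Rightarrow> nat \<Rightarrow> int"
    and le :: "monom \<Rightarrow> monom \<Rightarrow> bool" and p :: int
  assumes "arrangement l n alpha"
    and "term_order l le"
    and "prime p"
    and "lucky_k l n alpha le 2 p"
  shows "good_prime l n alpha p"
  unfolding good_prime_def
proof (intro allI impI conjI notI)
  fix i j assume ij: "i < j \<and> j < n"
  {
    assume "\<exists>c. \<forall>k<l. [alpha i k = c * alpha j k] (mod p)"
    then obtain c where "\<forall>k<l. [alpha i k = c * alpha j k] (mod p)" by blast
    then show False using bad_pair[OF assms, of i j c] ij by auto
  next
    assume "\<exists>c. \<forall>k<l. [alpha j k = c * alpha i k] (mod p)"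
    then obtain c where "\<forall>k<l. [alpha j k = c * alpha i k] (mod p)" by blast
    then show False using bad_pair[OF assms, of j i c] ij by auto
  }
qed

end
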